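(* Let $\mathbf{Z}=\{Z_{\mathbf{u}}\}_{\mathbf{u}\in\mathbb{R}^2}$ be a max-stable random field with unit Fréchet margins $F(z)=\exp(-z^{-1})$, $z>0$. Let $\mathbf{x}=\{\mathbf{x}_1,\ldots,\mathbf{x}_k\}$ and $\mathbf{y}=\{\mathbf{y}_1,\ldots,\mathbf{y}_s\}$ be two disjoint sets of locations in $\mathbb{R}^2$, and put $M(\mathbf{x})=\bigvee_{i=1}^k Z_{\mathbf{x}_i}$, $M(\mathbf{y})=\bigvee_{j=1}^s Z_{\mathbf{y}_j}$. For $\alpha>0,\beta>0$ define the generalized madogram $$\nu^{\alpha,\beta}(\mathbf{x},\mathbf{y})=\tfrac12 E\left|F^{\alpha}(M(\mathbf{x}))-F^{\beta}(M(\mathbf{y}))\right|.$$ Define, for $z_1,\ldots,z_{k+s}>0$, $$G_{\mathbf{x},\mathbf{y}}(z_1,\ldots,z_{k+s})=P\Big(\bigcap_{i=1}^k\{Z_{\mathbf{x}_i}\le z_i\}\cap\bigcap_{j=1}^s\{Z_{\mathbf{y}_j}\le z_{k+j}\}\Big),\qquad V_{\mathbf{x},\mathbf{y}}=-\ln G_{\mathbf{x},\mathbf{y}},$$ and similarly $V_{\mathbf{x}}(z_1,\ldots,z_k)=-\ln P(Z_{\mathbf{x}_1}\le z_1,\ldots,Z_{\mathbf{x}_k}\le z_k)$ and $V_{\mathbf{y}}(z_1,\ldots,z_s)=-\ln P(Z_{\mathbf{y}_1}\le z_1,\ldots,Z_{\mathbf{y}_s}\le z_s)$. Then for all $\alpha,\beta>0$,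 $$\nu^{\alpha,\beta}(\mathbf{x},\mathbf{y})=\frac{V_{\mathbf{x},\mathbf{y}}(\alpha,\ldots,\alpha,\beta,\ldots,\beta)}{1+V_{\mathbf{x},\mathbf{y}}(\alpha,\ldots,\alpha,\beta,\ldots,\beta)}-c(\alpha,\beta),$$ where in $V_{\mathbf{x},\mathbf{y}}(\alpha,\ldots,\alpha,\beta,\ldots,\beta)$ the first $k$ arguments equal $\alpha$ and the last $s$ equal $\beta$, and $$c(\alpha,\beta)=\frac12\left(\frac{V_{\mathbf{x}}(1,\ldots,1)}{\alpha+V_{\mathbf{x}}(1,\ldots,1)}+\frac{V_{\mathbf{y}}(1,\ldots,1)}{\beta+V_{\mathbf{y}}(1,\ldots,1)}\right).$$
   Context: A max-stable random field with unit Fréchet margins has finite-dimensional distributions that are multivariate extreme value distributions of the form $G(z_1,\ldots,z_m)=\exp(-V(z_1,\ldots,z_m))$, where the dependence function $V$ is homogeneous of order $-1$: $V(a z_1,\ldots,a z_m)=a^{-1}V(z_1,\ldots,z_m)$ for $a>0$. *)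

theory Defs
  imports "HOL-Probability.Probability"
begin

definition frechet_cdf :: "real \<Rightarrow> real" where
  "frechet_cdf z = (if 0 < z then exp (- 1 / z) else 0)"

definition joint_cdf :: "'a measure \<Rightarrow> ('i \<Rightarrow> 'a \<Rightarrow> real) \<Rightarrow> 'i list \<Rightarrow> (nat \<Rightarrow> real) \<Rightarrow> real" where
  "joint_cdf M Z us zs = measure M {\<omega> \<in> space M. \<forall>i<length us. Z (us ! i) \<omega> \<le> zs i}"

definition dep_fun :: "'a measure \<Rightarrow> ('i \<Rightarrow> 'a \<Rightarrow> real) \<Rightarrow> 'i list \<Rightarrow> (nat \<Rightarrow> real) \<Rightarrow> real" where
  "dep_fun M Z us zs = - ln (joint_cdf M Z us zs)"

text \<open>Max-stable random field with unit Frechet margins: every finite-dimensional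
  distribution is G = exp(-V) (so G > 0 at positive arguments) with V homogeneous of
  order -1.\<close>
definition max_stable_frechet :: "'a measure \<Rightarrow> ('i \<Rightarrow> 'a \<Rightarrow> real) \<Rightarrow> bool" where
  "max_stable_frechet M Z \<longleftrightarrow>
     (\<forall>u. Z u \<in> borel_measurable M) \<and>
     (\<forall>u z. 0 < z \<longrightarrow> measure M {\<omega> \<in> space M. Z u \<omega> \<le> z} = exp (- 1 / z)) \<and>
     (\<forall>us zs. (\<forall>i<length us. 0 < zs i) \<longrightarrow> 0 < joint_cdf M Z us zs) \<and>
     (\<forall>us zs a. (\<forall>i<length us. 0 < zs i) \<and> 0 < a \<longrightarrow>
        dep_fun M Z us (\<lambda>i. a * zs i) = dep_fun M Z us zs / a)"

definition field_max :: "('i \<Rightarrow> 'a \<Rightarrow> real) \<Rightarrow> 'i list \<Rightarrow> 'a \<Rightarrow> real" where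
  "field_max Z us \<omega> = Max ((\<lambda>u. Z u \<omega>) ` set us)"

definition gen_madogram :: "'a measure \<Rightarrow> ('i \<Rightarrow> 'a \<Rightarrow> real) \<Rightarrow> real \<Rightarrow> real \<Rightarrow> 'i list \<Rightarrow> 'i list \<Rightarrow> real" where
  "gen_madogram M Z \<alpha> \<beta> xs ys =
     1/2 * (\<integral>\<omega>. \<bar>frechet_cdf (field_max Z xs \<omega>) powr \<alpha> - frechet_cdf (field_max Z ys \<omega>) powr \<beta>\<bar> \<partial>M)"

end

theory Submission
  imports Defs
begin


lemma powr_le_1': "0 \<le> (a::real) \<Longrightarrow> 0 \<le> u \<Longrightarrow> u \<le> 1 \<Longrightarrow> u powr a \<le> 1"
  using powr_mono2[of a u 1] by simp

lemma layer_expect: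
  fixes T :: "'a \<Rightarrow> real" and \<theta> :: real
  assumes P: "prob_space M" and T[measurable]: "T \<in> borel_measurable M"
    and rng: "\<And>\<omega>. \<omega> \<in> space M \<Longrightarrow> 0 \<le> T \<omega> \<and> T \<omega> \<le> 1"
    and th: "0 \<le> \<theta>"
    and cdf: "\<And>u. 0 < u \<Longrightarrow> u < 1 \<Longrightarrow> measure M {\<omega>\<in>space M. T \<omega> \<le> u} = u powr \<theta>"
  shows "integral\<^sup>L M T = \<theta> / (\<theta> + 1)"
proof -
  interpret prob_space M by (rule P)
  interpret pair_sigma_finite M lborel
    by (simp add: lborel.sigma_finite_measure_axioms pair_sigma_finite.intro sigma_finite_measure_axioms)
  define F where "F = (\<lambda>\<omega> u. ennreal (if 0 \<le> u \<and> u < T \<omega> then 1 else 0))"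
  have Fm: "case_prod F \<in> borel_measurable (M \<Otimes>\<^sub>M lborel)"
    unfolding F_def by measurable
  have inner: "(\<integral>\<^sup>+ u. F \<omega> u \<partial>lborel) = ennreal (T \<omega>)" if "\<omega> \<in> space M" for \<omega>
  proof -
    have "(\<integral>\<^sup>+ u. F \<omega> u \<partial>lborel) = (\<integral>\<^sup>+ u. indicator {0..<T \<omega>} u \<partial>lborel)"
      unfolding F_def by (intro nn_integral_cong) (auto simp: indicator_def)
    also have "\<dots> = ennreal (T \<omega>)" using rng[OF that] by simp
    finally show ?thesis .
  qed
  define g where "g = (\<lambda>u::real. 1 - u powr \<theta>)"
  have inner2: "AE u in lborel. (\<integral>\<^sup>+ \<omega>. F \<omega> u \<partial>M) = ennreal (g u) * indicator {0..1} u"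
    using AE_lborel_singleton[of "0::real"]
  proof eventually_elim
    case (elim u)
    have eq: "(\<integral>\<^sup>+ \<omega>. F \<omega> u \<partial>M) = emeasure M {\<omega>\<in>space M. 0 \<le> u \<and> u < T \<omega>}"
    proof -
      have [measurable]: "{\<omega>\<in>space M. 0 \<le> u \<and> u < T \<omega>} \<in> sets M" by measurable
      have "(\<integral>\<^sup>+ \<omega>. F \<omega> u \<partial>M) = (\<integral>\<^sup>+ \<omega>. indicator {\<omega>\<in>space M. 0 \<le> u \<and> u < T \<omega>} \<omega> \<partial>M)"
        unfolding F_def by (intro nn_integral_cong) (auto simp: indicator_def)
      then show ?thesis by simp
    qed
    show ?case
    proof (cases "0 < u \<and> u < 1")
      case True
      have "{\<omega>\<in>space M. 0 \<le> u \<and> u < T \<omega>} = space M - {\<omega>\<in>space M. T \<omega> \<le> u}"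
        using True by auto
      then have "emeasure M {\<omega>\<in>space M. 0 \<le> u \<and> u < T \<omega>} = ennreal (1 - u powr \<theta>)"
        using True cdf[of u] by (simp add: emeasure_eq_measure prob_compl)
      then show ?thesis using True eq by (simp add: g_def)
    next
      case False
      then have "{\<omega>\<in>space M. 0 \<le> u \<and> u < T \<omega>} = {}"
        using rng elim by force
      moreover have "ennreal (g u) * indicator {0..1} u = 0"
        using False elim by (auto simp: g_def indicator_def)
      ultimately show ?thesis using eq by (metis emeasure_empty)
    qed
  qed
  have hi: "(g has_integral (1 - 1 / (\<theta> + 1))) {0..1}"
    unfolding g_def
    using has_integral_diff[OF has_integral_const_real[of 1 0 1] has_integral_powr_from_0[of \<theta> 1]] th
    by simp
  have gnn: "0 \<le> g u" if "u \<in> {0..1}" for u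
    using that th unfolding g_def by (auto intro: powr_le_1')
  have "(\<integral>\<^sup>+ \<omega>. ennreal (T \<omega>) \<partial>M) = (\<integral>\<^sup>+ \<omega>. (\<integral>\<^sup>+ u. F \<omega> u \<partial>lborel) \<partial>M)"
    by (intro nn_integral_cong) (simp add: inner)
  also have "\<dots> = (\<integral>\<^sup>+ u. (\<integral>\<^sup>+ \<omega>. F \<omega> u \<partial>M) \<partial>lborel)"
    by (rule Fubini'[OF Fm, symmetric])
  also have "\<dots> = (\<integral>\<^sup>+ u. ennreal (g u) * indicator {0..1} u \<partial>lborel)"
    by (rule nn_integral_cong_AE[OF inner2])
  also have "\<dots> = ennreal (1 - 1 / (\<theta> + 1))"
    by (rule nn_integral_has_integral_lebesgue'[OF gnn hi])
  finally have "(\<integral>\<^sup>+ \<omega>. ennreal (T \<omega>) \<partial>M) = ennreal (1 - 1 / (\<theta> + 1))" .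
  moreover have "integral\<^sup>L M T = enn2real (\<integral>\<^sup>+ \<omega>. ennreal (T \<omega>) \<partial>M)"
    using rng by (intro integral_eq_nn_integral) auto
  moreover have "1 - 1 / (\<theta> + 1) = \<theta> / (\<theta> + 1)" using th by (simp add: field_simps)
  moreover have "0 \<le> \<theta> / (\<theta> + 1)" using th by simp
  ultimately show ?thesis by simp
qed



lemma fc_le_iff:
  assumes a: "0 < a" and u: "0 < u" "u < 1"
  shows "(frechet_cdf m powr a \<le> u) \<longleftrightarrow> m \<le> a / (- ln u)"
proof -
  have L: "0 < - ln u" using u by simp
  show ?thesis
  proof (cases "0 < m")
    case True
    have "frechet_cdf m powr a = exp (- a / m)"
      using True by (simp add: frechet_cdf_def powr_def)
    also have "\<dots> \<le> u \<longleftrightarrow> - a / m \<le> ln u"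
      using u by (metis exp_le_cancel_iff exp_ln)
    also have "\<dots> \<longleftrightarrow> m \<le> a / (- ln u)"
      using True L a by (simp add: field_simps)
    finally show ?thesis .
  next
    case False
    then have "frechet_cdf m powr a = 0" by (simp add: frechet_cdf_def)
    moreover have "m \<le> a / (- ln u)" using False L a
      by (smt (verit) divide_pos_pos)
    ultimately show ?thesis using u by simp
  qed
qed

lemma field_max_le:
  assumes "us \<noteq> []"
  shows "field_max Z us \<omega> \<le> c \<longleftrightarrow> (\<forall>i<length us. Z (us!i) \<omega> \<le> c)"
  using assms unfolding field_max_def
  by (subst Max_le_iff) (auto simp: all_set_conv_all_nth)

lemma fc_range: "0 \<le> a \<Longrightarrow> 0 \<le> frechet_cdf m powr a \<and> frechet_cdf m powr a \<le> 1"
  by (auto simp: frechet_cdf_def intro!: powr_le_1')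

lemma fc_meas[measurable]:
  assumes [measurable]: "\<And>u. Z u \<in> borel_measurable M"
  shows "(\<lambda>\<omega>. frechet_cdf (field_max Z us \<omega>) powr a) \<in> borel_measurable M"
  unfolding frechet_cdf_def field_max_def by measurable

lemma dep_nonneg:
  assumes "prob_space M" "0 < joint_cdf M Z us zs"
  shows "0 \<le> dep_fun M Z us zs"
proof -
  have "joint_cdf M Z us zs \<le> 1" unfolding joint_cdf_def
    using prob_space.prob_le_1[OF assms(1)] by blast
  then show ?thesis using assms(2) unfolding dep_fun_def by simp
qed

lemma exp_dep:
  assumes "0 < joint_cdf M Z us zs"
  shows "exp (- dep_fun M Z us zs) = joint_cdf M Z us zs"
  using assms unfolding dep_fun_def by simp

lemma ms_pos: "max_stable_frechet M Z \<Longrightarrow> (\<forall>i<length us. 0 < zs i) \<Longrightarrow> 0 < joint_cdf M Z us zs"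
  unfolding max_stable_frechet_def by blast

lemma ms_hom: "max_stable_frechet M Z \<Longrightarrow> (\<forall>i<length us. 0 < zs i) \<Longrightarrow> 0 < a \<Longrightarrow>
   dep_fun M Z us (\<lambda>i. a * zs i) = dep_fun M Z us zs / a"
  unfolding max_stable_frechet_def by blast

lemma ms_meas: "max_stable_frechet M Z \<Longrightarrow> Z u \<in> borel_measurable M"
  unfolding max_stable_frechet_def by blast


lemma cdf_single:
  assumes ms: "max_stable_frechet M Z" and a: "0 < a" and u: "0 < u" "u < 1"
    and ne: "us \<noteq> []"
  shows "measure M {\<omega>\<in>space M. frechet_cdf (field_max Z us \<omega>) powr a \<le> u}
         = u powr (dep_fun M Z us (\<lambda>_. 1) / a)"
proof -
  define L where "L = - ln u"
  have L: "0 < L" using u by (simp add: L_def)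
  have "{\<omega>\<in>space M. frechet_cdf (field_max Z us \<omega>) powr a \<le> u}
      = {\<omega>\<in>space M. \<forall>i<length us. Z (us!i) \<omega> \<le> (\<lambda>_. a / L) i}"
    using fc_le_iff[OF a u, of "field_max Z us _"] field_max_le[OF ne, of Z] unfolding L_def by auto
  then have "measure M {\<omega>\<in>space M. frechet_cdf (field_max Z us \<omega>) powr a \<le> u}
      = joint_cdf M Z us (\<lambda>_. a / L)" by (simp add: joint_cdf_def)
  also have "\<dots> = exp (- dep_fun M Z us (\<lambda>_. a / L))"
    using ms_pos[OF ms, of us "\<lambda>_. a / L"] a L by (intro exp_dep[symmetric]) simp
  also have "dep_fun M Z us (\<lambda>_. a / L) = dep_fun M Z us (\<lambda>_. 1) / (a / L)"
    using ms_hom[OF ms, of us "\<lambda>_. 1" "a / L"] a L by simp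
  also have "exp (- (dep_fun M Z us (\<lambda>_. 1) / (a / L))) = u powr (dep_fun M Z us (\<lambda>_. 1) / a)"
    using u a by (simp add: powr_def L_def field_simps)
  finally show ?thesis .
qed


lemma cdf_joint:
  assumes ms: "max_stable_frechet M Z" and a: "0 < a" and b: "0 < b" and u: "0 < u" "u < 1"
    and ne: "xs \<noteq> []" "ys \<noteq> []"
  shows "measure M {\<omega>\<in>space M. max (frechet_cdf (field_max Z xs \<omega>) powr a)
                                     (frechet_cdf (field_max Z ys \<omega>) powr b) \<le> u}
         = u powr (dep_fun M Z (xs @ ys) (\<lambda>i. if i < length xs then a else b))"
proof -
  define L where "L = - ln u"
  have L: "0 < L" using u by (simp add: L_def)
  define zs where "zs = (\<lambda>i. if i < length xs then a else b)"
  have split: "(\<forall>i<length (xs@ys). Z ((xs@ys)!i) \<omega> \<le> (1/L) * zs i) \<longleftrightarrow>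
     (\<forall>i<length xs. Z (xs!i) \<omega> \<le> a / L) \<and> (\<forall>j<length ys. Z (ys!j) \<omega> \<le> b / L)" for \<omega>
  proof safe
    fix i assume "\<forall>i<length (xs@ys). Z ((xs@ys)!i) \<omega> \<le> (1/L) * zs i" "i < length xs"
    then show "Z (xs!i) \<omega> \<le> a / L" by (auto simp: zs_def nth_append dest!: spec[of _ i])
  next
    fix j assume "\<forall>i<length (xs@ys). Z ((xs@ys)!i) \<omega> \<le> (1/L) * zs i" "j < length ys"
    then show "Z (ys!j) \<omega> \<le> b / L" by (auto simp: zs_def nth_append dest!: spec[of _ "length xs + j"])
  next
    fix i assume "\<forall>i<length xs. Z (xs!i) \<omega> \<le> a / L" "\<forall>j<length ys. Z (ys!j) \<omega> \<le> b / L"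
      "i < length (xs @ ys)"
    then show "Z ((xs@ys)!i) \<omega> \<le> (1/L) * zs i"
      by (auto simp: zs_def nth_append)
  qed
  have "{\<omega>\<in>space M. max (frechet_cdf (field_max Z xs \<omega>) powr a)
                                     (frechet_cdf (field_max Z ys \<omega>) powr b) \<le> u}
      = {\<omega>\<in>space M. \<forall>i<length (xs@ys). Z ((xs@ys)!i) \<omega> \<le> (\<lambda>i. (1/L) * zs i) i}"
    using split fc_le_iff[OF a u, of "field_max Z xs _"] fc_le_iff[OF b u, of "field_max Z ys _"]
       field_max_le[OF ne(1), of Z] field_max_le[OF ne(2), of Z] unfolding L_def by auto
  then have "measure M {\<omega>\<in>space M. max (frechet_cdf (field_max Z xs \<omega>) powr a)
                                     (frechet_cdf (field_max Z ys \<omega>) powr b) \<le> u}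
      = joint_cdf M Z (xs@ys) (\<lambda>i. (1/L) * zs i)" by (simp add: joint_cdf_def)
  also have "\<dots> = exp (- dep_fun M Z (xs@ys) (\<lambda>i. (1/L) * zs i))"
    using ms_pos[OF ms, of "xs@ys" "\<lambda>i. (1/L) * zs i"] a b L by (intro exp_dep[symmetric]) (simp add: zs_def)
  also have "dep_fun M Z (xs@ys) (\<lambda>i. (1/L) * zs i) = dep_fun M Z (xs@ys) zs / (1/L)"
    using ms_hom[OF ms, of "xs@ys" zs "1/L"] a b L by (simp add: zs_def)
  also have "exp (- (dep_fun M Z (xs@ys) zs / (1/L))) = u powr (dep_fun M Z (xs@ys) zs)"
    using u by (simp add: powr_def L_def field_simps)
  finally show ?thesis by (simp add: zs_def)
qed



theorem proposition2p1:
  fixes M :: "'a measure" and Z :: "real^2 \<Rightarrow> 'a \<Rightarrow> real"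
    and xs ys :: "(real^2) list" and \<alpha> \<beta> :: real
  assumes "prob_space M"
    and "max_stable_frechet M Z"
    and "xs \<noteq> []" and "ys \<noteq> []"
    and "distinct xs" and "distinct ys" and "set xs \<inter> set ys = {}"
    and "0 < \<alpha>" and "0 < \<beta>"
  shows "gen_madogram M Z \<alpha> \<beta> xs ys =
           dep_fun M Z (xs @ ys) (\<lambda>i. if i < length xs then \<alpha> else \<beta>)
             / (1 + dep_fun M Z (xs @ ys) (\<lambda>i. if i < length xs then \<alpha> else \<beta>))
           - 1/2 * (dep_fun M Z xs (\<lambda>_. 1) / (\<alpha> + dep_fun M Z xs (\<lambda>_. 1))
                    + dep_fun M Z ys (\<lambda>_. 1) / (\<beta> + dep_fun M Z ys (\<lambda>_. 1)))"
proof -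
  note P = assms(1) and ms = assms(2)
  interpret prob_space M by (rule P)
  have Zm[measurable]: "\<And>u. Z u \<in> borel_measurable M" using ms_meas[OF ms] by blast
  define U where "U = (\<lambda>\<omega>. frechet_cdf (field_max Z xs \<omega>) powr \<alpha>)"
  define W where "W = (\<lambda>\<omega>. frechet_cdf (field_max Z ys \<omega>) powr \<beta>)"
  define V where "V = dep_fun M Z (xs @ ys) (\<lambda>i. if i < length xs then \<alpha> else \<beta>)"
  define Vx where "Vx = dep_fun M Z xs (\<lambda>_. 1)"
  define Vy where "Vy = dep_fun M Z ys (\<lambda>_. 1)"
  have Um[measurable]: "U \<in> borel_measurable M" unfolding U_def by (rule fc_meas[OF Zm])
  have Wm[measurable]: "W \<in> borel_measurable M" unfolding W_def by (rule fc_meas[OF Zm])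
  have Ur: "0 \<le> U \<omega> \<and> U \<omega> \<le> 1" for \<omega> unfolding U_def using fc_range assms(8) by simp
  have Wr: "0 \<le> W \<omega> \<and> W \<omega> \<le> 1" for \<omega> unfolding W_def using fc_range assms(9) by simp
  have V0: "0 \<le> V" unfolding V_def
    using assms(8,9) by (intro dep_nonneg[OF P] ms_pos[OF ms]) auto
  have Vx0: "0 \<le> Vx" unfolding Vx_def by (intro dep_nonneg[OF P] ms_pos[OF ms]) auto
  have Vy0: "0 \<le> Vy" unfolding Vy_def by (intro dep_nonneg[OF P] ms_pos[OF ms]) auto
  have EU: "integral\<^sup>L M U = (Vx/\<alpha>) / (Vx/\<alpha> + 1)"
    using Ur Vx0 assms(8) unfolding U_def Vx_def
    by (intro layer_expect[OF P fc_meas[OF Zm]] cdf_single[OF ms assms(8) _ _ assms(3)]) auto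
  have EW: "integral\<^sup>L M W = (Vy/\<beta>) / (Vy/\<beta> + 1)"
    using Wr Vy0 assms(9) unfolding W_def Vy_def
    by (intro layer_expect[OF P fc_meas[OF Zm]] cdf_single[OF ms assms(9) _ _ assms(4)]) auto
  have EX: "integral\<^sup>L M (\<lambda>\<omega>. max (U \<omega>) (W \<omega>)) = V / (V + 1)"
    using Ur Wr V0 unfolding U_def W_def V_def
    by (intro layer_expect[OF P] cdf_joint[OF ms assms(8,9) _ _ assms(3,4)]) (auto simp: le_max_iff_disj)
  have iU: "integrable M U" using Ur by (intro integrable_const_bound[where B=1]) auto
  have iW: "integrable M W" using Wr by (intro integrable_const_bound[where B=1]) auto
  have iX: "integrable M (\<lambda>\<omega>. max (U \<omega>) (W \<omega>))"
  proof (rule integrable_const_bound[where B=1])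
    show "AE x in M. norm (max (U x) (W x)) \<le> 1"
      using Ur Wr by (intro AE_I2) (smt (verit) real_norm_def)
  qed simp
  have "gen_madogram M Z \<alpha> \<beta> xs ys = 1/2 * integral\<^sup>L M (\<lambda>\<omega>. 2 * max (U \<omega>) (W \<omega>) - U \<omega> - W \<omega>)"
    unfolding gen_madogram_def U_def W_def
    by (intro arg_cong[where f="\<lambda>x. 1/2 * x"] Bochner_Integration.integral_cong) auto
  also have "\<dots> = 1/2 * (2 * integral\<^sup>L M (\<lambda>\<omega>. max (U \<omega>) (W \<omega>)) - integral\<^sup>L M U - integral\<^sup>L M W)"
    using iU iW iX by simp
  also have "\<dots> = V / (1 + V) - 1/2 * (Vx / (\<alpha> + Vx) + Vy / (\<beta> + Vy))"
  proof -
    have a: "(Vx/\<alpha>) / (Vx/\<alpha> + 1) = Vx / (\<alpha> + Vx)"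
      using assms(8) Vx0 by (simp add: field_simps)
    have b: "(Vy/\<beta>) / (Vy/\<beta> + 1) = Vy / (\<beta> + Vy)"
      using assms(9) Vy0 by (simp add: field_simps)
    show ?thesis unfolding EU EW EX a b by (simp add: add.commute field_simps)
  qed
  finally show ?thesis unfolding V_def Vx_def Vy_def .
qed

end
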